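(* Let $d=2$, $\varepsilon>0$, $\pi<q^{2+\varepsilon}$ and $L=q^{-1-\varepsilon/3}$. For $q$ small enough, the $\nu\otimes\mu$-probability that the origin belongs to an infinite cluster of good boxes is at least $1-16q^{\varepsilon/3}$.
   Context: Environment $\omega\in\{\text{susceptible},\text{immune}\}^{\mathbb{Z}^2}$ drawn from $\nu$, the product measure with $\nu(\omega_x=\text{immune})=\pi$; given $\omega$, a configuration $\eta\in\{i,h\}^{\mathcal{S}}$ on the susceptible set $\mathcal{S}$ is drawn from $\mu$, the product measure with $\mu(\eta_x=i)=q$; $\nu\otimes\mu$ is the joint law. Boxes are the sets $L\hat x+[L]^2$, $\hat x\in\mathbb{Z}^2$, with $[L]=\{1,\dots,L\}$ ($L$ rounded to an integer), forming a coarse-grained lattice in which two boxes are adjacent when their indices $\hat x$ are nearest neighbours in $\mathbb{Z}^2$. A box is good if all its sites are susceptible and each of its rows and columns contains at least one infected site. A cluster of good boxes is a connected component of good boxes in the coarse-grained lattice; "the origin belongs to" it means the box containing the origin is in it. *)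

theory Defs
  imports "HOL-Probability.Probability"
begin

type_synonym site = "int \<times> int"

text \<open>Environment: omega x = True means site x is immune.
  Configuration: eta x = True means site x is infected (i), False healthy (h).
  The values of eta at immune sites are irrelevant for every event below.\<close>

definition env_law :: "real \<Rightarrow> (site \<Rightarrow> bool) measure" where
  "env_law p = PiM UNIV (\<lambda>_. measure_pmf (bernoulli_pmf p))"

definition config_law :: "real \<Rightarrow> (site \<Rightarrow> bool) measure" where
  "config_law q = PiM UNIV (\<lambda>_. measure_pmf (bernoulli_pmf q))"

definition joint_law :: "real \<Rightarrow> real \<Rightarrow> ((site \<Rightarrow> bool) \<times> (site \<Rightarrow> bool)) measure" where
  "joint_law p q = env_law p \<Otimes>\<^sub>M config_law q"

definition box :: "nat \<Rightarrow> site \<Rightarrow> site set" where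
  "box L xh = {(int L * fst xh + i, int L * snd xh + j) | i j. 1 \<le> i \<and> i \<le> int L \<and> 1 \<le> j \<and> j \<le> int L}"

definition good_box :: "nat \<Rightarrow> (site \<Rightarrow> bool) \<Rightarrow> (site \<Rightarrow> bool) \<Rightarrow> site \<Rightarrow> bool" where
  "good_box L omega eta xh \<longleftrightarrow>
     (\<forall>x \<in> box L xh. \<not> omega x) \<and>
     (\<forall>j \<in> {1..int L}. \<exists>i \<in> {1..int L}. eta (int L * fst xh + i, int L * snd xh + j)) \<and>
     (\<forall>i \<in> {1..int L}. \<exists>j \<in> {1..int L}. eta (int L * fst xh + i, int L * snd xh + j))"

definition nn_adj :: "site \<Rightarrow> site \<Rightarrow> bool" where
  "nn_adj a b \<longleftrightarrow> \<bar>fst a - fst b\<bar> + \<bar>snd a - snd b\<bar> = 1"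

definition good_cluster :: "nat \<Rightarrow> (site \<Rightarrow> bool) \<Rightarrow> (site \<Rightarrow> bool) \<Rightarrow> site \<Rightarrow> site set" where
  "good_cluster L omega eta xh =
     (if good_box L omega eta xh then
        {y. (\<lambda>a b. nn_adj a b \<and> good_box L omega eta a \<and> good_box L omega eta b)\<^sup>*\<^sup>* xh y}
      else {})"

definition origin_in_infinite_cluster :: "nat \<Rightarrow> (site \<Rightarrow> bool) \<Rightarrow> (site \<Rightarrow> bool) \<Rightarrow> bool" where
  "origin_in_infinite_cluster L omega eta \<longleftrightarrow>
     (\<exists>xh. (0,0) \<in> box L xh \<and> good_box L omega eta xh \<and> infinite (good_cluster L omega eta xh))"

definition box_side :: "real \<Rightarrow> real \<Rightarrow> nat" where
  "box_side q eps = nat \<lfloor>q powr (-1 - eps/3)\<rfloor>"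

end

theory Submission
  imports Defs "HOL-Real_Asymp.Real_Asymp"
begin


definition sub :: "site \<Rightarrow> int \<Rightarrow> int \<Rightarrow> site" where
  "sub c i j = (3 * fst c + i, 3 * snd c + j)"

definition subs :: "site \<Rightarrow> site set" where
  "subs c = (\<lambda>(i,j). sub c i j) ` ({0..2} \<times> {0..2})"

primrec kg :: "(site \<Rightarrow> bool) \<Rightarrow> nat \<Rightarrow> site \<Rightarrow> bool" where
  "kg g 0 c = g c"
| "kg g (Suc k) c = (\<forall>s\<in>subs c. \<forall>t\<in>subs c. s \<noteq> t \<longrightarrow> kg g k s \<or> kg g k t)"

primrec TT :: "(site \<Rightarrow> bool) \<Rightarrow> nat \<Rightarrow> site \<Rightarrow> site set" where
  "TT g 0 c = {c}"
| "TT g (Suc k) c = (\<Union>s\<in>{s\<in>subs c. kg g k s}. TT g k s)"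

primrec region :: "nat \<Rightarrow> site \<Rightarrow> site set" where
  "region 0 c = {c}"
| "region (Suc k) c = (\<Union>s\<in>subs c. region k s)"

lemma sub_in_subs: "i \<in> {0..2} \<Longrightarrow> j \<in> {0..2} \<Longrightarrow> sub c i j \<in> subs c"
  unfolding subs_def by force

lemma sub_eq_iff: "sub c i j = sub c i' j' \<longleftrightarrow> i = i' \<and> j = j'"
  by (auto simp: sub_def)

lemma subs_finite: "finite (subs c)"
  unfolding subs_def by auto

lemma subs_card: "card (subs c) \<le> 9"
proof -
  have "card (subs c) \<le> card ({0..2::int} \<times> {0..2::int})"
    unfolding subs_def by (rule card_image_le) auto
  also have "\<dots> = 9" by (simp add: card_cartesian_product)
  finally show ?thesis .
qed

lemma region_finite: "finite (region k c)"
  by (induction k arbitrary: c) (auto simp: subs_finite)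

lemma region_div: "b \<in> region k c \<Longrightarrow> (fst b div 3^k, snd b div 3^k) = c"
proof (induction k arbitrary: c)
  case 0 then show ?case by simp
next
  case (Suc k)
  then obtain s where s: "s \<in> subs c" "b \<in> region k s" by auto
  from s(1) obtain i j where ij: "i \<in> {0..2}" "j \<in> {0..2}" "s = sub c i j"
    unfolding subs_def by auto
  from Suc.IH[OF s(2)] have h: "fst b div 3^k = fst s" "snd b div 3^k = snd s" by auto
  have p3: "(3::int)^(Suc k) = 3^k * 3" by simp
  have "fst b div 3^(Suc k) = (fst b div 3^k) div 3"
    unfolding p3 by (rule zdiv_zmult2_eq) simp
  also have "\<dots> = fst c" using h ij by (auto simp: sub_def)
  finally have 1: "fst b div 3^(Suc k) = fst c" .
  have "snd b div 3^(Suc k) = (snd b div 3^k) div 3"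
    unfolding p3 by (rule zdiv_zmult2_eq) simp
  also have "\<dots> = snd c" using h ij by (auto simp: sub_def)
  finally have 2: "snd b div 3^(Suc k) = snd c" .
  show ?case using 1 2 by (simp add: prod_eq_iff)
qed

lemma region_disj: "c \<noteq> c' \<Longrightarrow> region k c \<inter> region k c' = {}"
  using region_div by blast

lemma TT_region: "a \<in> TT g k c \<Longrightarrow> a \<in> region k c"
  by (induction k arbitrary: c) auto

lemma TT_good: "kg g k c \<Longrightarrow> a \<in> TT g k c \<Longrightarrow> g a"
  by (induction k arbitrary: c) auto

lemma kg_pair: "kg g (Suc k) c \<Longrightarrow> i \<in> {0..2} \<Longrightarrow> j \<in> {0..2} \<Longrightarrow> i' \<in> {0..2} \<Longrightarrow> j' \<in> {0..2}
   \<Longrightarrow> (i,j) \<noteq> (i',j') \<Longrightarrow> kg g k (sub c i j) \<or> kg g k (sub c i' j')"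
  using sub_in_subs sub_eq_iff by (metis kg.simps(2) prod.inject)

lemma TT_sub: "kg g k (sub c i j) \<Longrightarrow> i \<in> {0..2} \<Longrightarrow> j \<in> {0..2} \<Longrightarrow> TT g k (sub c i j) \<subseteq> TT g (Suc k) c"
  unfolding TT.simps by (rule UN_upper) (simp add: sub_in_subs)


lemma nn_adj_sym: "nn_adj a b \<Longrightarrow> nn_adj b a"
  by (simp add: nn_adj_def abs_minus_commute)

lemma nn_adj_cases: "nn_adj c c' \<Longrightarrow> c' = (fst c + 1, snd c) \<or> c = (fst c' + 1, snd c') \<or>
   c' = (fst c, snd c + 1) \<or> c = (fst c', snd c' + 1)"
  by (cases c, cases c') (auto simp: nn_adj_def abs_if split: if_splits)

lemma TT_adj: "kg g k c \<Longrightarrow> kg g k c' \<Longrightarrow> nn_adj c c' \<Longrightarrow> \<exists>a\<in>TT g k c. \<exists>b\<in>TT g k c'. nn_adj a b"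
proof (induction k arbitrary: c c')
  case 0 then show ?case by auto
next
  case (Suc k)
  have right: "\<exists>a\<in>TT g (Suc k) d. \<exists>b\<in>TT g (Suc k) d'. nn_adj a b"
    if d: "kg g (Suc k) d" "kg g (Suc k) d'" "d' = (fst d + 1, snd d)" for d d'
  proof -
    have "\<exists>j\<in>{0..2}. kg g k (sub d 2 j) \<and> kg g k (sub d' 0 j)"
    proof (rule ccontr)
      assume "\<not> ?thesis"
      then have h0: "\<not> kg g k (sub d 2 0) \<or> \<not> kg g k (sub d' 0 0)"
        and h1: "\<not> kg g k (sub d 2 1) \<or> \<not> kg g k (sub d' 0 1)"
        and h2: "\<not> kg g k (sub d 2 2) \<or> \<not> kg g k (sub d' 0 2)" by auto
      have "kg g k (sub d 2 0) \<or> kg g k (sub d 2 1)" "kg g k (sub d 2 0) \<or> kg g k (sub d 2 2)"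
        "kg g k (sub d 2 1) \<or> kg g k (sub d 2 2)"
        by (rule kg_pair[OF d(1)]; simp)+
      moreover have "kg g k (sub d' 0 0) \<or> kg g k (sub d' 0 1)" "kg g k (sub d' 0 0) \<or> kg g k (sub d' 0 2)"
        "kg g k (sub d' 0 1) \<or> kg g k (sub d' 0 2)"
        by (rule kg_pair[OF d(2)]; simp)+
      ultimately show False using h0 h1 h2 by blast
    qed
    then obtain j where j: "j \<in> {0..2}" "kg g k (sub d 2 j)" "kg g k (sub d' 0 j)" by blast
    have adj: "nn_adj (sub d 2 j) (sub d' 0 j)" by (simp add: nn_adj_def sub_def d(3))
    from Suc.IH[OF j(2) j(3) adj] obtain a b where
      ab: "a \<in> TT g k (sub d 2 j)" "b \<in> TT g k (sub d' 0 j)" "nn_adj a b" by blast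
    show ?thesis using subsetD[OF TT_sub[OF j(2) _ j(1)] ab(1)] subsetD[OF TT_sub[OF j(3) _ j(1)] ab(2)] ab(3) by force
  qed
  have up: "\<exists>a\<in>TT g (Suc k) d. \<exists>b\<in>TT g (Suc k) d'. nn_adj a b"
    if d: "kg g (Suc k) d" "kg g (Suc k) d'" "d' = (fst d, snd d + 1)" for d d'
  proof -
    have "\<exists>j\<in>{0..2}. kg g k (sub d j 2) \<and> kg g k (sub d' j 0)"
    proof (rule ccontr)
      assume "\<not> ?thesis"
      then have h0: "\<not> kg g k (sub d 0 2) \<or> \<not> kg g k (sub d' 0 0)"
        and h1: "\<not> kg g k (sub d 1 2) \<or> \<not> kg g k (sub d' 1 0)"
        and h2: "\<not> kg g k (sub d 2 2) \<or> \<not> kg g k (sub d' 2 0)" by auto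
      have "kg g k (sub d 0 2) \<or> kg g k (sub d 1 2)" "kg g k (sub d 0 2) \<or> kg g k (sub d 2 2)"
        "kg g k (sub d 1 2) \<or> kg g k (sub d 2 2)"
        by (rule kg_pair[OF d(1)]; simp)+
      moreover have "kg g k (sub d' 0 0) \<or> kg g k (sub d' 1 0)" "kg g k (sub d' 0 0) \<or> kg g k (sub d' 2 0)"
        "kg g k (sub d' 1 0) \<or> kg g k (sub d' 2 0)"
        by (rule kg_pair[OF d(2)]; simp)+
      ultimately show False using h0 h1 h2 by blast
    qed
    then obtain j where j: "j \<in> {0..2}" "kg g k (sub d j 2)" "kg g k (sub d' j 0)" by blast
    have adj: "nn_adj (sub d j 2) (sub d' j 0)" by (simp add: nn_adj_def sub_def d(3))
    from Suc.IH[OF j(2) j(3) adj] obtain a b where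
      ab: "a \<in> TT g k (sub d j 2)" "b \<in> TT g k (sub d' j 0)" "nn_adj a b" by blast
    show ?thesis using subsetD[OF TT_sub[OF j(2) j(1)] ab(1)] subsetD[OF TT_sub[OF j(3) j(1)] ab(2)] ab(3) by force
  qed
  from nn_adj_cases[OF Suc.prems(3)] show ?case
  proof (elim disjE)
    assume "c' = (fst c + 1, snd c)" then show ?thesis using right Suc.prems by blast
  next
    assume "c = (fst c' + 1, snd c')"
    then obtain a b where "a \<in> TT g (Suc k) c'" "b \<in> TT g (Suc k) c" "nn_adj a b"
      using right Suc.prems by blast
    then show ?thesis using nn_adj_sym by blast
  next
    assume "c' = (fst c, snd c + 1)" then show ?thesis using up Suc.prems by blast
  next
    assume "c = (fst c', snd c' + 1)"
    then obtain a b where "a \<in> TT g (Suc k) c'" "b \<in> TT g (Suc k) c" "nn_adj a b"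
      using up Suc.prems by blast
    then show ?thesis using nn_adj_sym by blast
  qed
qed


definition Qg :: "(int \<Rightarrow> int \<Rightarrow> bool) \<Rightarrow> int \<times> int \<Rightarrow> int \<times> int \<Rightarrow> bool" where
  "Qg G u v = (fst u \<in> {0..2} \<and> snd u \<in> {0..2} \<and> fst v \<in> {0..2} \<and> snd v \<in> {0..2} \<and>
     G (fst u) (snd u) \<and> G (fst v) (snd v) \<and> nn_adj u v)"

lemma rtranclp_sym: assumes "\<And>a b. Q a b \<Longrightarrow> Q b a" "Q\<^sup>*\<^sup>* a b" shows "Q\<^sup>*\<^sup>* b a"
  using assms(2)
proof (induction rule: rtranclp_induct)
  case base then show ?case by simp
next
  case (step y z) then show ?case by (meson assms(1) converse_rtranclp_into_rtranclp)
qed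

lemma Qg_sym: "Qg G a b \<Longrightarrow> Qg G b a"
  unfolding Qg_def using nn_adj_sym by blast

lemma grid_hub:
  assumes pair: "\<And>i j i' j'. i \<in> {0..2} \<Longrightarrow> j \<in> {0..2} \<Longrightarrow> i' \<in> {0..2} \<Longrightarrow> j' \<in> {0..2} \<Longrightarrow>
      (i,j) \<noteq> (i',j') \<Longrightarrow> G i j \<or> G i' j'"
  shows "\<exists>h. \<forall>i\<in>{0..2}. \<forall>j\<in>{0..2}. G i j \<longrightarrow> (Qg G)\<^sup>*\<^sup>* h (i,j)"
proof (cases "G 1 1")
  case True
  let ?Q = "Qg G"
  have st: "?Q\<^sup>*\<^sup>* a c" if "?Q\<^sup>*\<^sup>* a b" "?Q b c" for a b c
    using that by (rule rtranclp.rtrancl_into_rtrancl)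
  have e: "?Q (i,j) (i',j')" if "i \<in> {0..2}" "j \<in> {0..2}" "i' \<in> {0..2}" "j' \<in> {0..2}"
    "G i j" "G i' j'" "\<bar>i - i'\<bar> + \<bar>j - j'\<bar> = 1" for i j i' j'
    using that by (simp add: Qg_def nn_adj_def)
  have r: "?Q\<^sup>*\<^sup>* (1,1) (1,1)" by simp
  have m01: "G 0 1 \<Longrightarrow> ?Q\<^sup>*\<^sup>* (1,1) (0,1)" by (rule st[OF r e]) (use True in auto)
  have m10: "G 1 0 \<Longrightarrow> ?Q\<^sup>*\<^sup>* (1,1) (1,0)" by (rule st[OF r e]) (use True in auto)
  have m21: "G 2 1 \<Longrightarrow> ?Q\<^sup>*\<^sup>* (1,1) (2,1)" by (rule st[OF r e]) (use True in auto)
  have m12: "G 1 2 \<Longrightarrow> ?Q\<^sup>*\<^sup>* (1,1) (1,2)" by (rule st[OF r e]) (use True in auto)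
  have p1: "G 0 1 \<or> G 1 0" "G 0 1 \<or> G 1 2" "G 2 1 \<or> G 1 0" "G 2 1 \<or> G 1 2"
    by (rule pair; simp)+
  have c00: "G 0 0 \<Longrightarrow> ?Q\<^sup>*\<^sup>* (1,1) (0,0)"
    using p1(1) proof
    assume "G 0 0" "G 0 1" then show ?thesis by (intro st[OF m01 e]) auto
  next
    assume "G 0 0" "G 1 0" then show ?thesis by (intro st[OF m10 e]) auto
  qed
  have c02: "G 0 2 \<Longrightarrow> ?Q\<^sup>*\<^sup>* (1,1) (0,2)"
    using p1(2) proof
    assume "G 0 2" "G 0 1" then show ?thesis by (intro st[OF m01 e]) auto
  next
    assume "G 0 2" "G 1 2" then show ?thesis by (intro st[OF m12 e]) auto
  qed
  have c20: "G 2 0 \<Longrightarrow> ?Q\<^sup>*\<^sup>* (1,1) (2,0)"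
    using p1(3) proof
    assume "G 2 0" "G 2 1" then show ?thesis by (intro st[OF m21 e]) auto
  next
    assume "G 2 0" "G 1 0" then show ?thesis by (intro st[OF m10 e]) auto
  qed
  have c22: "G 2 2 \<Longrightarrow> ?Q\<^sup>*\<^sup>* (1,1) (2,2)"
    using p1(4) proof
    assume "G 2 2" "G 2 1" then show ?thesis by (intro st[OF m21 e]) auto
  next
    assume "G 2 2" "G 1 2" then show ?thesis by (intro st[OF m12 e]) auto
  qed
  have g3: "{0..2::int} = {0,1,2}" by auto
  show ?thesis
    by (rule exI[of _ "(1,1)"]) (use r m01 m10 m21 m12 c00 c02 c20 c22 in \<open>auto simp: g3\<close>)
next
  case False
  let ?Q = "Qg G"
  have gd: "G i j" if "i \<in> {0..2}" "j \<in> {0..2}" "(i,j) \<noteq> (1,1)" for i j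
    using pair[OF that(1,2), of 1 1] that False by auto
  have st: "?Q\<^sup>*\<^sup>* a c" if "?Q\<^sup>*\<^sup>* a b" "?Q b c" for a b c
    using that by (rule rtranclp.rtrancl_into_rtrancl)
  have e: "?Q (i,j) (i',j')" if "i \<in> {0..2}" "j \<in> {0..2}" "i' \<in> {0..2}" "j' \<in> {0..2}"
    "(i,j) \<noteq> (1,1)" "(i',j') \<noteq> (1,1)" "\<bar>i - i'\<bar> + \<bar>j - j'\<bar> = 1" for i j i' j'
    using that gd by (simp add: Qg_def nn_adj_def)
  have r: "?Q\<^sup>*\<^sup>* (0,0) (0,0)" by simp
  have a1: "?Q\<^sup>*\<^sup>* (0,0) (0,1)" by (rule st[OF r e]) auto
  have a2: "?Q\<^sup>*\<^sup>* (0,0) (0,2)" by (rule st[OF a1 e]) auto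
  have a3: "?Q\<^sup>*\<^sup>* (0,0) (1,2)" by (rule st[OF a2 e]) auto
  have a4: "?Q\<^sup>*\<^sup>* (0,0) (2,2)" by (rule st[OF a3 e]) auto
  have a5: "?Q\<^sup>*\<^sup>* (0,0) (2,1)" by (rule st[OF a4 e]) auto
  have a6: "?Q\<^sup>*\<^sup>* (0,0) (2,0)" by (rule st[OF a5 e]) auto
  have a7: "?Q\<^sup>*\<^sup>* (0,0) (1,0)" by (rule st[OF a6 e]) auto
  have g3: "{0..2::int} = {0,1,2}" by auto
  show ?thesis
    by (rule exI[of _ "(0,0)"]) (use r a1 a2 a3 a4 a5 a6 a7 False in \<open>auto simp: g3\<close>)
qed

lemma grid_conn:
  assumes pair: "\<And>i j i' j'. i \<in> {0..2} \<Longrightarrow> j \<in> {0..2} \<Longrightarrow> i' \<in> {0..2} \<Longrightarrow> j' \<in> {0..2} \<Longrightarrow>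
      (i,j) \<noteq> (i',j') \<Longrightarrow> G i j \<or> G i' j'"
    and uv: "i \<in> {0..2}" "j \<in> {0..2}" "i' \<in> {0..2}" "j' \<in> {0..2}" "G i j" "G i' j'"
  shows "(Qg G)\<^sup>*\<^sup>* (i,j) (i',j')"
proof -
  obtain h where h: "\<forall>i\<in>{0..2}. \<forall>j\<in>{0..2}. G i j \<longrightarrow> (Qg G)\<^sup>*\<^sup>* h (i,j)"
  proof -
    have "\<exists>h. \<forall>i\<in>{0..2}. \<forall>j\<in>{0..2}. G i j \<longrightarrow> (Qg G)\<^sup>*\<^sup>* h (i,j)"
      by (rule grid_hub[of G, OF pair])
    then show ?thesis using that by blast
  qed
  have hu: "(Qg G)\<^sup>*\<^sup>* h (i,j)" using h uv(1,2,5) by blast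
  have "(Qg G)\<^sup>*\<^sup>* (i,j) h" by (rule rtranclp_sym[OF Qg_sym hu])
  moreover have "(Qg G)\<^sup>*\<^sup>* h (i',j')" using h uv(3,4,6) by blast
  ultimately show ?thesis by (rule rtranclp_trans)
qed


lemma TT_main: "kg g k c \<Longrightarrow> TT g k c \<noteq> {} \<and>
   (\<forall>a\<in>TT g k c. \<forall>b\<in>TT g k c. (\<lambda>a b. nn_adj a b \<and> g a \<and> g b)\<^sup>*\<^sup>* a b) \<and>
   finite (TT g k c) \<and> k + 1 \<le> card (TT g k c)"
proof (induction k arbitrary: c)
  case 0 then show ?case by simp
next
  case (Suc k)
  let ?R = "\<lambda>a b. nn_adj a b \<and> g a \<and> g b"
  define G where "G = (\<lambda>i j. kg g k (sub c i j))"
  have pair: "G i j \<or> G i' j'" if "i \<in> {0..2}" "j \<in> {0..2}" "i' \<in> {0..2}" "j' \<in> {0..2}"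
      "(i,j) \<noteq> (i',j')" for i j i' j'
    unfolding G_def by (rule kg_pair[OF Suc.prems that])
  have fin: "finite (TT g (Suc k) c)"
    by (rule finite_subset[OF _ region_finite[of "Suc k" c]]) (auto dest: TT_region)
  have "G 0 0 \<or> G 0 1" "G 0 0 \<or> G 0 2" "G 0 1 \<or> G 0 2" by (rule pair; simp)+
  then have "G 0 0 \<and> G 0 1 \<or> G 0 0 \<and> G 0 2 \<or> G 0 1 \<and> G 0 2" by blast
  then obtain j1 j2 where j: "j1 \<in> {0..2}" "j2 \<in> {0..2}" "j1 \<noteq> j2" "G 0 j1" "G 0 j2"
    apply (elim disjE conjE)
    subgoal by (rule that[of 0 1]) auto
    subgoal by (rule that[of 0 2]) auto
    subgoal by (rule that[of 1 2]) auto
    done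
  let ?s1 = "sub c 0 j1" and ?s2 = "sub c 0 j2"
  have s12: "?s1 \<noteq> ?s2" using j(3) by (simp add: sub_eq_iff)
  have sub1: "TT g k ?s1 \<subseteq> TT g (Suc k) c" using TT_sub j(1,4) G_def by simp
  have sub2: "TT g k ?s2 \<subseteq> TT g (Suc k) c" using TT_sub j(2,5) G_def by simp
  have IH1: "TT g k ?s1 \<noteq> {}" "finite (TT g k ?s1)" "k + 1 \<le> card (TT g k ?s1)"
    using Suc.IH[of ?s1] j(4) G_def by auto
  have IH2: "finite (TT g k ?s2)" "k + 1 \<le> card (TT g k ?s2)"
    using Suc.IH[of ?s2] j(5) G_def by auto
  have disj: "TT g k ?s1 \<inter> TT g k ?s2 = {}"
    using region_disj[OF s12, of k] TT_region by blast
  have "card (TT g k ?s1 \<union> TT g k ?s2) \<le> card (TT g (Suc k) c)"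
    by (rule card_mono[OF fin]) (use sub1 sub2 in blast)
  moreover have "card (TT g k ?s1 \<union> TT g k ?s2) = card (TT g k ?s1) + card (TT g k ?s2)"
    by (rule card_Un_disjoint[OF IH1(2) IH2(1) disj])
  ultimately have card: "Suc k + 1 \<le> card (TT g (Suc k) c)" using IH1(3) IH2(2) by linarith
  have ne: "TT g (Suc k) c \<noteq> {}" using sub1 IH1(1) by blast
  have lift: "\<forall>a\<in>TT g k (sub c (fst u) (snd u)). \<forall>b\<in>TT g k (sub c (fst v) (snd v)). ?R\<^sup>*\<^sup>* a b"
    if "(Qg G)\<^sup>*\<^sup>* u v" "G (fst u) (snd u)" for u v
    using that(1)
  proof (induction rule: rtranclp_induct)
    case base then show ?case using Suc.IH that(2) G_def by blast
  next
    case (step y z)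
    from step.hyps(2) have yz: "G (fst y) (snd y)" "G (fst z) (snd z)" "nn_adj y z"
      unfolding Qg_def by auto
    have adj: "nn_adj (sub c (fst y) (snd y)) (sub c (fst z) (snd z))"
      using yz(3) by (simp add: nn_adj_def sub_def)
    have Iy: "TT g k (sub c (fst y) (snd y)) \<noteq> {}"
      "\<forall>a\<in>TT g k (sub c (fst y) (snd y)). \<forall>b\<in>TT g k (sub c (fst y) (snd y)). ?R\<^sup>*\<^sup>* a b"
      using Suc.IH yz(1) G_def by blast+
    have Iz: "\<forall>a\<in>TT g k (sub c (fst z) (snd z)). \<forall>b\<in>TT g k (sub c (fst z) (snd z)). ?R\<^sup>*\<^sup>* a b"
      using Suc.IH yz(2) G_def by blast
    obtain a' b' where ab': "a' \<in> TT g k (sub c (fst y) (snd y))" "b' \<in> TT g k (sub c (fst z) (snd z))"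
      "nn_adj a' b'"
      using TT_adj[OF _ _ adj] yz(1,2) G_def by blast
    have ga: "g a'" "g b'" using TT_good ab'(1,2) yz(1,2) G_def by blast+
    obtain m where m: "m \<in> TT g k (sub c (fst y) (snd y))" using Iy(1) by blast
    show ?case
    proof (intro ballI)
      fix a b assume a: "a \<in> TT g k (sub c (fst u) (snd u))" and b: "b \<in> TT g k (sub c (fst z) (snd z))"
      have "?R\<^sup>*\<^sup>* a m" using step.IH a m by blast
      also have "?R\<^sup>*\<^sup>* m a'" using Iy(2) m ab'(1) by blast
      also have "?R a' b'" using ab'(3) ga by blast
      also have "?R\<^sup>*\<^sup>* b' b" using Iz ab'(2) b by blast
      finally show "?R\<^sup>*\<^sup>* a b" .
    qed
  qed
  have conn: "\<forall>a\<in>TT g (Suc k) c. \<forall>b\<in>TT g (Suc k) c. ?R\<^sup>*\<^sup>* a b"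
  proof (intro ballI)
    fix a b assume a: "a \<in> TT g (Suc k) c" and b: "b \<in> TT g (Suc k) c"
    from a obtain s where s: "s \<in> subs c" "kg g k s" "a \<in> TT g k s" by auto
    from s(1) obtain i j where ij: "i \<in> {0..2}" "j \<in> {0..2}" "s = sub c i j"
      unfolding subs_def by auto
    from b obtain t where t: "t \<in> subs c" "kg g k t" "b \<in> TT g k t" by auto
    from t(1) obtain i' j' where ij': "i' \<in> {0..2}" "j' \<in> {0..2}" "t = sub c i' j'"
      unfolding subs_def by auto
    have "(Qg G)\<^sup>*\<^sup>* (i,j) (i',j')"
      by (rule grid_conn[of G, OF pair]) (use ij ij' s t G_def in auto)
    from lift[OF this] s t ij ij' G_def show "?R\<^sup>*\<^sup>* a b" by auto
  qed
  show ?case using ne conn fin card by blast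
qed



definition cyl :: "site set \<Rightarrow> (site \<Rightarrow> bool set) \<Rightarrow> (site \<Rightarrow> bool set) \<Rightarrow> ((site \<Rightarrow> bool) \<times> (site \<Rightarrow> bool)) set" where
  "cyl S X Y = {w. \<forall>x\<in>S. fst w x \<in> X x \<and> snd w x \<in> Y x}"

abbreviation PiB :: "real \<Rightarrow> (site \<Rightarrow> bool) measure" where
  "PiB p \<equiv> PiM UNIV (\<lambda>_. measure_pmf (bernoulli_pmf p))"

lemma PiB_prob: "prob_space (PiB p)"
  by (rule prob_space_PiM) (rule prob_space_measure_pmf)

lemma space_PiB: "space (PiB p) = UNIV"
  by (simp add: space_PiM)

lemma joint_prob: "prob_space (joint_law p q)"
  unfolding joint_law_def env_law_def config_law_def
  by (intro prob_space_pair PiB_prob)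

lemma space_joint: "space (joint_law p q) = UNIV"
  unfolding joint_law_def env_law_def config_law_def
  by (simp add: space_pair_measure space_PiB)

lemma PiB_Collect:
  assumes "finite S"
  shows "{\<omega>. \<forall>x\<in>S. \<omega> x \<in> X x} \<in> sets (PiB p)"
    and "emeasure (PiB p) {\<omega>. \<forall>x\<in>S. \<omega> x \<in> X x} = (\<Prod>x\<in>S. emeasure (measure_pmf (bernoulli_pmf p)) (X x))"
proof -
  interpret product_prob_space "\<lambda>_::site. measure_pmf (bernoulli_pmf p)" "UNIV :: site set"
    by unfold_locales
  have eq: "{\<omega>. \<forall>x\<in>S. \<omega> x \<in> X x} = {\<omega>\<in>space (PiB p). \<forall>x\<in>S. \<omega> x \<in> X x}"
    by (simp add: space_PiB)
  show "{\<omega>. \<forall>x\<in>S. \<omega> x \<in> X x} \<in> sets (PiB p)"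
    unfolding eq using assms by measurable
  show "emeasure (PiB p) {\<omega>. \<forall>x\<in>S. \<omega> x \<in> X x} = (\<Prod>x\<in>S. emeasure (measure_pmf (bernoulli_pmf p)) (X x))"
    unfolding eq by (rule emeasure_PiM_Collect) (use assms in auto)
qed

lemma cyl_sets: "finite S \<Longrightarrow> cyl S X Y \<in> sets (joint_law p q)"
proof -
  assume S: "finite S"
  have "cyl S X Y = {\<omega>. \<forall>x\<in>S. \<omega> x \<in> X x} \<times> {\<omega>. \<forall>x\<in>S. \<omega> x \<in> Y x}"
    by (auto simp: cyl_def)
  then show ?thesis
    unfolding joint_law_def env_law_def config_law_def
    using PiB_Collect(1)[OF S] by (simp add: pair_measureI)
qed

lemma cyl_measure:
  assumes S: "finite S"
  shows "measure (joint_law p q) (cyl S X Y) =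
    (\<Prod>x\<in>S. measure (measure_pmf (bernoulli_pmf p)) (X x) * measure (measure_pmf (bernoulli_pmf q)) (Y x))"
proof -
  interpret P: prob_space "PiB p" by (rule PiB_prob)
  interpret Q: prob_space "PiB q" by (rule PiB_prob)
  interpret J: prob_space "joint_law p q" by (rule joint_prob)
  have eq: "cyl S X Y = {\<omega>. \<forall>x\<in>S. \<omega> x \<in> X x} \<times> {\<omega>. \<forall>x\<in>S. \<omega> x \<in> Y x}"
    by (auto simp: cyl_def)
  have "emeasure (joint_law p q) (cyl S X Y) =
      emeasure (PiB p) {\<omega>. \<forall>x\<in>S. \<omega> x \<in> X x} * emeasure (PiB q) {\<omega>. \<forall>x\<in>S. \<omega> x \<in> Y x}"
    unfolding eq joint_law_def env_law_def config_law_def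
    by (rule Q.emeasure_pair_measure_Times) (rule PiB_Collect(1)[OF S])+
  also have "\<dots> = (\<Prod>x\<in>S. emeasure (measure_pmf (bernoulli_pmf p)) (X x)) *
                  (\<Prod>x\<in>S. emeasure (measure_pmf (bernoulli_pmf q)) (Y x))"
    by (simp add: PiB_Collect(2)[OF S])
  also have "\<dots> = ennreal (\<Prod>x\<in>S. measure (measure_pmf (bernoulli_pmf p)) (X x) * measure (measure_pmf (bernoulli_pmf q)) (Y x))"
    by (simp add: measure_pmf.emeasure_eq_measure prod_ennreal prod.distrib ennreal_mult'' prod_nonneg)
  finally show ?thesis
    by (simp add: J.emeasure_eq_measure prod_nonneg)
qed


lemma joint_finite: "emeasure (joint_law p q) A \<noteq> top"
proof -
  interpret J: prob_space "joint_law p q" by (rule joint_prob)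
  show ?thesis by (rule J.emeasure_finite)
qed

lemma joint_finite': "emeasure (joint_law p q) A \<noteq> \<infinity>"
  using joint_finite by (simp add: infinity_ennreal_def)

definition dep :: "site set \<Rightarrow> ((site \<Rightarrow> bool) \<times> (site \<Rightarrow> bool)) set \<Rightarrow> bool" where
  "dep A E \<longleftrightarrow> (\<forall>w w'. (\<forall>x\<in>A. fst w x = fst w' x \<and> snd w x = snd w' x) \<longrightarrow> (w \<in> E \<longleftrightarrow> w' \<in> E))"

definition pt :: "site set \<Rightarrow> (site \<Rightarrow> bool) \<times> (site \<Rightarrow> bool) \<Rightarrow> ((site \<Rightarrow> bool) \<times> (site \<Rightarrow> bool)) set" where
  "pt A w = cyl A (\<lambda>x. {fst w x}) (\<lambda>x. {snd w x})"

definition FA :: "site set \<Rightarrow> (site \<Rightarrow> bool) set" where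
  "FA A = {f. \<forall>x. x \<notin> A \<longrightarrow> \<not> f x}"

definition RR :: "site set \<Rightarrow> ((site \<Rightarrow> bool) \<times> (site \<Rightarrow> bool)) set \<Rightarrow> ((site \<Rightarrow> bool) \<times> (site \<Rightarrow> bool)) set" where
  "RR A E = {w \<in> E. fst w \<in> FA A \<and> snd w \<in> FA A}"

lemma FA_finite: "finite A \<Longrightarrow> finite (FA A)"
proof -
  assume A: "finite A"
  have "FA A \<subseteq> (\<lambda>T x. x \<in> T) ` Pow A"
  proof
    fix f assume "f \<in> FA A"
    then have "f = (\<lambda>x. x \<in> {x\<in>A. f x})" unfolding FA_def by (intro ext) blast
    then show "f \<in> (\<lambda>T x. x \<in> T) ` Pow A" by blast
  qed
  then show ?thesis using A by (meson finite_Pow_iff finite_imageI finite_subset)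
qed

lemma RR_finite: "finite A \<Longrightarrow> finite (RR A E)"
  by (rule finite_subset[of _ "FA A \<times> FA A"]) (auto simp: RR_def FA_finite)

lemma dep_decomp: "dep A E \<Longrightarrow> E = (\<Union>w\<in>RR A E. pt A w)"
proof
  assume d: "dep A E"
  show "E \<subseteq> (\<Union>w\<in>RR A E. pt A w)"
  proof
    fix w assume w: "w \<in> E"
    let ?w0 = "((\<lambda>x. x \<in> A \<and> fst w x), (\<lambda>x. x \<in> A \<and> snd w x))"
    from d have "\<forall>w'. (\<forall>x\<in>A. fst ?w0 x = fst w' x \<and> snd ?w0 x = snd w' x) \<longrightarrow> (?w0 \<in> E \<longleftrightarrow> w' \<in> E)"
      unfolding dep_def by (rule spec)
    then have "(\<forall>x\<in>A. fst ?w0 x = fst w x \<and> snd ?w0 x = snd w x) \<longrightarrow> (?w0 \<in> E \<longleftrightarrow> w \<in> E)"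
      by (rule spec)
    then have "?w0 \<in> E" using w by simp
    then have "?w0 \<in> RR A E" by (auto simp: RR_def FA_def)
    moreover have "w \<in> pt A ?w0" by (auto simp: pt_def cyl_def)
    ultimately show "w \<in> (\<Union>w\<in>RR A E. pt A w)" by blast
  qed
  show "(\<Union>w\<in>RR A E. pt A w) \<subseteq> E"
  proof
    fix v assume "v \<in> (\<Union>w\<in>RR A E. pt A w)"
    then obtain w where w: "w \<in> RR A E" "v \<in> pt A w" by blast
    then have "\<forall>x\<in>A. fst w x = fst v x \<and> snd w x = snd v x" by (auto simp: pt_def cyl_def)
    with d w(1) show "v \<in> E" unfolding dep_def RR_def by blast
  qed
qed

lemma pt_disj: "w \<in> RR A E \<Longrightarrow> w' \<in> RR A E' \<Longrightarrow> w \<noteq> w' \<Longrightarrow> pt A w \<inter> pt A w' = {}"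
proof (rule ccontr)
  assume w: "w \<in> RR A E" "w' \<in> RR A E'" "w \<noteq> w'" and "pt A w \<inter> pt A w' \<noteq> {}"
  then obtain v where "v \<in> pt A w" "v \<in> pt A w'" by blast
  then have a: "\<forall>x\<in>A. fst w x = fst w' x \<and> snd w x = snd w' x" by (auto simp: pt_def cyl_def)
  have "fst w = fst w'" "snd w = snd w'"
    using a w(1,2) by (auto simp: RR_def FA_def fun_eq_iff)
  then show False using w(3) by (simp add: prod_eq_iff)
qed

lemma dep_sets: "finite A \<Longrightarrow> dep A E \<Longrightarrow> E \<in> sets (joint_law p q)"
  apply (subst dep_decomp, assumption)
  apply (rule sets.finite_UN)
  apply (simp add: RR_finite)
  apply (simp add: pt_def cyl_sets)
  done

lemma dep_measure: "finite A \<Longrightarrow> dep A E \<Longrightarrow>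
    measure (joint_law p q) E = (\<Sum>w\<in>RR A E. measure (joint_law p q) (pt A w))"
  apply (subst dep_decomp, assumption)
  apply (rule measure_finite_Union)
  apply (simp add: RR_finite)
  apply (auto simp: pt_def cyl_sets disjoint_family_on_def)[1]
  apply (auto simp: disjoint_family_on_def dest: pt_disj)[1]
  apply (rule joint_finite')
  done

lemma pt_measure: "finite A \<Longrightarrow> measure (joint_law p q) (pt A w) =
   (\<Prod>x\<in>A. measure (measure_pmf (bernoulli_pmf p)) {fst w x} * measure (measure_pmf (bernoulli_pmf q)) {snd w x})"
  unfolding pt_def by (rule cyl_measure)

lemma dep_indep:
  assumes A: "finite A" and B: "finite B" and AB: "A \<inter> B = {}" and E: "dep A E" and F: "dep B F"
  shows "measure (joint_law p q) (E \<inter> F) = measure (joint_law p q) E * measure (joint_law p q) F"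
proof -
  let ?J = "joint_law p q"
  let ?f = "\<lambda>w x. measure (measure_pmf (bernoulli_pmf p)) {fst w x} * measure (measure_pmf (bernoulli_pmf q)) {snd w x}"
  have EF: "E \<inter> F = (\<Union>ww\<in>RR A E \<times> RR B F. pt A (fst ww) \<inter> pt B (snd ww))"
  proof -
    define UE where "UE = (\<Union>w\<in>RR A E. pt A w)"
    define UF where "UF = (\<Union>w\<in>RR B F. pt B w)"
    have "E = UE" unfolding UE_def by (rule dep_decomp[OF E])
    moreover have "F = UF" unfolding UF_def by (rule dep_decomp[OF F])
    moreover have "UE \<inter> UF = (\<Union>ww\<in>RR A E \<times> RR B F. pt A (fst ww) \<inter> pt B (snd ww))"
      unfolding UE_def UF_def by auto
    ultimately show ?thesis by simp
  qed
  have fin: "finite (RR A E \<times> RR B F)" using RR_finite A B by blast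
  have cyl_eq: "pt A w \<inter> pt B w' = cyl (A \<union> B) (\<lambda>x. if x \<in> A then {fst w x} else {fst w' x})
      (\<lambda>x. if x \<in> A then {snd w x} else {snd w' x})" for w w'
    using AB by (auto simp: pt_def cyl_def)
  have m: "measure ?J (pt A w \<inter> pt B w') = measure ?J (pt A w) * measure ?J (pt B w')" for w w'
  proof -
    have "measure ?J (pt A w \<inter> pt B w') =
      (\<Prod>x\<in>A \<union> B. measure (measure_pmf (bernoulli_pmf p)) (if x \<in> A then {fst w x} else {fst w' x}) *
           measure (measure_pmf (bernoulli_pmf q)) (if x \<in> A then {snd w x} else {snd w' x}))"
      unfolding cyl_eq by (rule cyl_measure) (use A B in simp)
    also have "\<dots> = (\<Prod>x\<in>A. ?f w x) * (\<Prod>x\<in>B. ?f w' x)"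
      apply (subst prod.union_disjoint[OF A B AB])
      apply (rule arg_cong2[where f="(*)"])
      apply (rule prod.cong, simp, simp)
      apply (rule prod.cong, simp) using AB apply auto
      done
    also have "\<dots> = measure ?J (pt A w) * measure ?J (pt B w')"
      by (simp add: pt_measure A B)
    finally show ?thesis .
  qed
  have "measure ?J (E \<inter> F) = (\<Sum>ww\<in>RR A E \<times> RR B F. measure ?J (pt A (fst ww) \<inter> pt B (snd ww)))"
    unfolding EF
    apply (rule measure_finite_Union[OF fin])
    apply (auto simp: pt_def cyl_sets A B)[1]
    apply (auto simp: disjoint_family_on_def dest: pt_disj)[1]
    apply (rule joint_finite')
    done
  also have "\<dots> = (\<Sum>ww\<in>RR A E \<times> RR B F. measure ?J (pt A (fst ww)) * measure ?J (pt B (snd ww)))"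
    by (simp add: m)
  also have "\<dots> = (\<Sum>w\<in>RR A E. measure ?J (pt A w)) * (\<Sum>w'\<in>RR B F. measure ?J (pt B w'))"
    by (simp add: sum_product sum.cartesian_product case_prod_beta)
  also have "\<dots> = measure ?J E * measure ?J F"
    by (simp add: dep_measure[OF A E] dep_measure[OF B F])
  finally show ?thesis .
qed


definition gb :: "nat \<Rightarrow> (site \<Rightarrow> bool) \<times> (site \<Rightarrow> bool) \<Rightarrow> site \<Rightarrow> bool" where
  "gb L w = good_box L (fst w) (snd w)"

definition sites :: "nat \<Rightarrow> nat \<Rightarrow> site \<Rightarrow> site set" where
  "sites L k c = (\<Union>a\<in>region k c. box L a)"

lemma box_eq: "box L a = (\<lambda>(i,j). (int L * fst a + i, int L * snd a + j)) ` ({1..int L} \<times> {1..int L})"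
proof
  show "box L a \<subseteq> (\<lambda>(i,j). (int L * fst a + i, int L * snd a + j)) ` ({1..int L} \<times> {1..int L})"
  proof
    fix x assume "x \<in> box L a"
    then obtain i j where ij: "x = (int L * fst a + i, int L * snd a + j)" "1 \<le> i" "i \<le> int L" "1 \<le> j" "j \<le> int L"
      unfolding box_def by blast
    then show "x \<in> (\<lambda>(i,j). (int L * fst a + i, int L * snd a + j)) ` ({1..int L} \<times> {1..int L})"
      by (intro image_eqI[of _ _ "(i,j)"]) auto
  qed
  show "(\<lambda>(i,j). (int L * fst a + i, int L * snd a + j)) ` ({1..int L} \<times> {1..int L}) \<subseteq> box L a"
  proof
    fix x assume "x \<in> (\<lambda>(i,j). (int L * fst a + i, int L * snd a + j)) ` ({1..int L} \<times> {1..int L})"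
    then obtain i j where ij: "x = (int L * fst a + i, int L * snd a + j)" "i \<in> {1..int L}" "j \<in> {1..int L}"
      by auto
    then show "x \<in> box L a" unfolding box_def by auto
  qed
qed

lemma box_finite: "finite (box L a)"
  unfolding box_eq by simp

lemma box_card: "card (box L a) \<le> L * L"
proof -
  have "card (box L a) \<le> card ({1..int L} \<times> {1..int L})"
    unfolding box_eq by (rule card_image_le) simp
  also have "\<dots> = L * L" by (simp add: card_cartesian_product)
  finally show ?thesis .
qed

lemma box_idx: "L > 0 \<Longrightarrow> x \<in> box L a \<Longrightarrow> ((fst x - 1) div int L, (snd x - 1) div int L) = a"
proof -
  assume L: "L > 0" and x: "x \<in> box L a"
  then obtain i j where ij: "x = (int L * fst a + i, int L * snd a + j)" "1 \<le> i" "i \<le> int L" "1 \<le> j" "j \<le> int L"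
    unfolding box_def by blast
  have d: "(int L * b + r) div int L = b" if "0 \<le> r" "r < int L" for b r
  proof -
    have "(int L * b + r) div int L = b + r div int L" using L by simp
    also have "r div int L = 0" using that by (simp add: div_pos_pos_trivial)
    finally show ?thesis by simp
  qed
  have "(fst x - 1) div int L = fst a" using d[of "i - 1" "fst a"] ij by (simp add: algebra_simps)
  moreover have "(snd x - 1) div int L = snd a" using d[of "j - 1" "snd a"] ij by (simp add: algebra_simps)
  ultimately show ?thesis by (simp add: prod_eq_iff)
qed

lemma box_disj: "L > 0 \<Longrightarrow> a \<noteq> b \<Longrightarrow> box L a \<inter> box L b = {}"
  using box_idx by blast

lemma sites_finite: "finite (sites L k c)"
  unfolding sites_def by (simp add: region_finite box_finite)

lemma sites_disj: "L > 0 \<Longrightarrow> c \<noteq> c' \<Longrightarrow> sites L k c \<inter> sites L k c' = {}"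
proof (rule ccontr)
  assume L: "L > 0" and cc: "c \<noteq> c'" and "sites L k c \<inter> sites L k c' \<noteq> {}"
  then obtain x where "x \<in> sites L k c" "x \<in> sites L k c'" by blast
  then obtain a b where ab: "a \<in> region k c" "x \<in> box L a" "b \<in> region k c'" "x \<in> box L b"
    unfolding sites_def by blast
  have "a = b" using box_idx[OF L ab(2)] box_idx[OF L ab(4)] by simp
  then show False using region_disj[OF cc, of k] ab(1,3) by blast
qed

lemma sites_sub: "s \<in> subs c \<Longrightarrow> sites L k s \<subseteq> sites L (Suc k) c"
  unfolding sites_def by auto

lemma gb_dep: "\<forall>x\<in>box L a. fst w x = fst w' x \<and> snd w x = snd w' x \<Longrightarrow> gb L w a = gb L w' a"
proof -
  assume h: "\<forall>x\<in>box L a. fst w x = fst w' x \<and> snd w x = snd w' x"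
  have mem: "(int L * fst a + i, int L * snd a + j) \<in> box L a" if "i \<in> {1..int L}" "j \<in> {1..int L}" for i j
    using that unfolding box_def by auto
  have e: "snd w (int L * fst a + i, int L * snd a + j) = snd w' (int L * fst a + i, int L * snd a + j)"
    if "i \<in> {1..int L}" "j \<in> {1..int L}" for i j
    using h mem[OF that] by blast
  have b: "(\<forall>x\<in>box L a. \<not> fst w x) = (\<forall>x\<in>box L a. \<not> fst w' x)" using h by auto
  have c2: "(\<forall>j\<in>{1..int L}. \<exists>i\<in>{1..int L}. snd w (int L * fst a + i, int L * snd a + j)) =
     (\<forall>j\<in>{1..int L}. \<exists>i\<in>{1..int L}. snd w' (int L * fst a + i, int L * snd a + j))"
    using e by blast
  have c3: "(\<forall>i\<in>{1..int L}. \<exists>j\<in>{1..int L}. snd w (int L * fst a + i, int L * snd a + j)) =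
     (\<forall>i\<in>{1..int L}. \<exists>j\<in>{1..int L}. snd w' (int L * fst a + i, int L * snd a + j))"
    using e by blast
  show ?thesis unfolding gb_def good_box_def b c2 c3 by (rule refl)
qed

lemma kg_dep: "\<forall>x\<in>sites L k c. fst w x = fst w' x \<and> snd w x = snd w' x \<Longrightarrow> kg (gb L w) k c = kg (gb L w') k c"
proof (induction k arbitrary: c)
  case 0 then show ?case by (simp add: gb_dep sites_def)
next
  case (Suc k)
  have "kg (gb L w) k s = kg (gb L w') k s" if "s \<in> subs c" for s
    using Suc.IH Suc.prems sites_sub[OF that] by blast
  then show ?case by simp
qed

lemma bad_dep: "dep (sites L k c) {w. \<not> kg (gb L w) k c}"
  unfolding dep_def using kg_dep by blast


lemma bern_T: "0 \<le> p \<Longrightarrow> p \<le> 1 \<Longrightarrow> measure (measure_pmf (bernoulli_pmf p)) {True} = p"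
  by (simp add: measure_pmf_single)

lemma bern_F: "0 \<le> p \<Longrightarrow> p \<le> 1 \<Longrightarrow> measure (measure_pmf (bernoulli_pmf p)) {False} = 1 - p"
  by (simp add: measure_pmf_single)

lemma bern_U: "measure (measure_pmf (bernoulli_pmf p)) UNIV = 1"
  using measure_pmf.prob_space[of "bernoulli_pmf p"] by simp

lemma bad_sets: "{w. \<not> kg (gb L w) k c} \<in> sets (joint_law p q)"
  by (rule dep_sets[OF sites_finite bad_dep])

lemma step_bound:
  assumes L: "L > 0" and b: "\<And>s. measure (joint_law p q) {w. \<not> kg (gb L w) k s} \<le> b"
  shows "measure (joint_law p q) {w. \<not> kg (gb L w) (Suc k) c} \<le> 81 * b^2"
proof -
  interpret J: prob_space "joint_law p q" by (rule joint_prob)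
  let ?B = "\<lambda>s. {w. \<not> kg (gb L w) k s}"
  have b0: "0 \<le> b" using b[of c] measure_nonneg order_trans by blast
  have sub: "{w. \<not> kg (gb L w) (Suc k) c} \<subseteq> (\<Union>s\<in>subs c. \<Union>t\<in>subs c - {s}. ?B s \<inter> ?B t)"
    by auto
  have "measure (joint_law p q) {w. \<not> kg (gb L w) (Suc k) c} \<le>
      measure (joint_law p q) (\<Union>s\<in>subs c. \<Union>t\<in>subs c - {s}. ?B s \<inter> ?B t)"
    by (rule J.finite_measure_mono[OF sub]) (intro sets.finite_UN subs_finite finite_Diff sets.Int bad_sets)
  also have "\<dots> \<le> (\<Sum>s\<in>subs c. measure (joint_law p q) (\<Union>t\<in>subs c - {s}. ?B s \<inter> ?B t))"
    by (rule measure_UNION_le[OF subs_finite]) (intro sets.finite_UN subs_finite finite_Diff sets.Int bad_sets)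
  also have "\<dots> \<le> (\<Sum>s\<in>subs c. (\<Sum>t\<in>subs c - {s}. measure (joint_law p q) (?B s \<inter> ?B t)))"
    by (intro sum_mono measure_UNION_le finite_Diff subs_finite sets.Int bad_sets)
  also have "\<dots> = (\<Sum>s\<in>subs c. (\<Sum>t\<in>subs c - {s}. measure (joint_law p q) (?B s) * measure (joint_law p q) (?B t)))"
    apply (intro sum.cong refl)
    apply (rule dep_indep[OF sites_finite sites_finite sites_disj[OF L] bad_dep bad_dep])
    apply auto
    done
  also have "\<dots> \<le> (\<Sum>s\<in>subs c. (\<Sum>t\<in>subs c - {s}. b * b))"
    by (intro sum_mono mult_mono b b0 measure_nonneg)
  also have "\<dots> \<le> (\<Sum>s\<in>subs c. 9 * (b * b))"
  proof (intro sum_mono)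
    fix s
    have "card (subs c - {s}) \<le> 9" using subs_card[of c] by (meson card_Diff1_le order_trans subs_finite)
    then have "real (card (subs c - {s})) * (b * b) \<le> 9 * (b * b)"
      by (intro mult_right_mono) (auto simp: b0)
    then show "(\<Sum>t\<in>subs c - {s}. b * b) \<le> 9 * (b * b)" by simp
  qed
  also have "\<dots> \<le> 9 * (9 * (b * b))"
  proof -
    have "real (card (subs c)) * (9 * (b * b)) \<le> 9 * (9 * (b * b))"
      using subs_card[of c] by (intro mult_right_mono) (auto simp: b0)
    then show ?thesis by simp
  qed
  also have "\<dots> = 81 * b^2" by (simp add: power2_eq_square)
  finally show ?thesis .
qed

lemma all_bound:
  assumes L: "L > 0" and d0: "0 \<le> d" and d1: "162 * d \<le> 1"
    and base: "\<And>s. measure (joint_law p q) {w. \<not> kg (gb L w) 0 s} \<le> d"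
  shows "measure (joint_law p q) {w. \<not> kg (gb L w) k c} \<le> d * (1/2)^k"
proof (induction k arbitrary: c)
  case 0 then show ?case using base by simp
next
  case (Suc k)
  have "measure (joint_law p q) {w. \<not> kg (gb L w) (Suc k) c} \<le> 81 * (d * (1/2)^k)^2"
    by (rule step_bound[OF L Suc.IH])
  also have "\<dots> \<le> d * (1/2)^(Suc k)"
  proof -
    have h: "(1/2::real)^k \<le> 1" by (simp add: power_le_one)
    have "81 * (d * (1/2)^k)^2 = (81 * d) * (d * (1/2)^k * (1/2)^k)" by (simp add: power2_eq_square)
    also have "\<dots> \<le> (1/2) * (d * (1/2)^k * 1)"
      by (intro mult_mono mult_left_mono h) (use d0 d1 in auto)
    also have "\<dots> = d * (1/2)^(Suc k)" by simp
    finally show ?thesis .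
  qed
  finally show ?case .
qed


lemma line_card: "card ((\<lambda>i. f i) ` {1..int L}) = L" if "inj f" for f :: "int \<Rightarrow> site"
  using that by (simp add: card_image inj_on_subset)

lemma base_bound:
  assumes L: "L > 0" and p: "0 \<le> p" "p \<le> 1" and q: "0 \<le> q" "q \<le> 1"
  shows "measure (joint_law p q) {w. \<not> kg (gb L w) 0 c} \<le> real L * real L * p + 2 * real L * (1 - q)^L"
proof -
  interpret J: prob_space "joint_law p q" by (rule joint_prob)
  let ?J = "joint_law p q"
  define row where "row j = (\<lambda>i. (int L * fst c + i, int L * snd c + j)) ` {1..int L}" for j
  define col where "col i = (\<lambda>j. (int L * fst c + i, int L * snd c + j)) ` {1..int L}" for i
  define U1 where "U1 = (\<Union>x\<in>box L c. cyl {x} (\<lambda>_. {True}) (\<lambda>_. UNIV))"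
  define U2 where "U2 = (\<Union>j\<in>{1..int L}. cyl (row j) (\<lambda>_. UNIV) (\<lambda>_. {False}))"
  define U3 where "U3 = (\<Union>i\<in>{1..int L}. cyl (col i) (\<lambda>_. UNIV) (\<lambda>_. {False}))"
  have rowc: "card (row j) = L" for j
    unfolding row_def by (rule line_card) (auto simp: inj_def)
  have colc: "card (col i) = L" for i
    unfolding col_def by (rule line_card) (auto simp: inj_def)
  have rowf: "finite (row j)" for j unfolding row_def by simp
  have colf: "finite (col i)" for i unfolding col_def by simp
  have S1: "U1 \<in> sets ?J" unfolding U1_def by (intro sets.finite_UN box_finite cyl_sets) auto
  have S2: "U2 \<in> sets ?J" unfolding U2_def by (intro sets.finite_UN cyl_sets rowf) auto
  have S3: "U3 \<in> sets ?J" unfolding U3_def by (intro sets.finite_UN cyl_sets colf) auto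
  have sub: "{w. \<not> kg (gb L w) 0 c} \<subseteq> U1 \<union> U2 \<union> U3"
  proof
    fix w assume "w \<in> {w. \<not> kg (gb L w) 0 c}"
    then have "\<not> good_box L (fst w) (snd w) c" by (simp add: gb_def)
    then consider (a) "\<exists>x\<in>box L c. fst w x"
      | (b) "\<exists>j\<in>{1..int L}. \<forall>i\<in>{1..int L}. \<not> snd w (int L * fst c + i, int L * snd c + j)"
      | (cc) "\<exists>i\<in>{1..int L}. \<forall>j\<in>{1..int L}. \<not> snd w (int L * fst c + i, int L * snd c + j)"
      unfolding good_box_def by blast
    then show "w \<in> U1 \<union> U2 \<union> U3"
    proof cases
      case a then show ?thesis unfolding U1_def cyl_def by auto
    next
      case b then show ?thesis unfolding U2_def cyl_def row_def by auto
    next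
      case cc then show ?thesis unfolding U3_def cyl_def col_def by auto
    qed
  qed
  have m1: "measure ?J U1 \<le> real L * real L * p"
  proof -
    have "measure ?J U1 \<le> (\<Sum>x\<in>box L c. measure ?J (cyl {x} (\<lambda>_. {True}) (\<lambda>_. UNIV)))"
      unfolding U1_def by (intro measure_UNION_le box_finite cyl_sets) auto
    also have "\<dots> = (\<Sum>x\<in>box L c. p)"
      by (intro sum.cong refl) (simp add: cyl_measure bern_T[OF p] bern_U)
    also have "\<dots> = real (card (box L c)) * p" by simp
    also have "\<dots> \<le> real L * real L * p"
    proof -
      have "real (card (box L c)) \<le> real L * real L" using box_card[of L c] by (simp flip: of_nat_mult)
      then show ?thesis by (rule mult_right_mono) (use p in auto)
    qed
    finally show ?thesis .
  qed
  have m2: "measure ?J U2 \<le> real L * (1 - q)^L"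
  proof -
    have "measure ?J U2 \<le> (\<Sum>j\<in>{1..int L}. measure ?J (cyl (row j) (\<lambda>_. UNIV) (\<lambda>_. {False})))"
      unfolding U2_def by (intro measure_UNION_le cyl_sets rowf) auto
    also have "\<dots> = (\<Sum>j\<in>{1..int L}. (1 - q)^L)"
      by (intro sum.cong refl) (simp add: cyl_measure[OF rowf] bern_F[OF q] bern_U rowc)
    also have "\<dots> = real L * (1 - q)^L" by simp
    finally show ?thesis .
  qed
  have m3: "measure ?J U3 \<le> real L * (1 - q)^L"
  proof -
    have "measure ?J U3 \<le> (\<Sum>i\<in>{1..int L}. measure ?J (cyl (col i) (\<lambda>_. UNIV) (\<lambda>_. {False})))"
      unfolding U3_def by (intro measure_UNION_le cyl_sets colf) auto
    also have "\<dots> = (\<Sum>i\<in>{1..int L}. (1 - q)^L)"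
      by (intro sum.cong refl) (simp add: cyl_measure[OF colf] bern_F[OF q] bern_U colc)
    also have "\<dots> = real L * (1 - q)^L" by simp
    finally show ?thesis .
  qed
  have "measure ?J {w. \<not> kg (gb L w) 0 c} \<le> measure ?J (U1 \<union> U2 \<union> U3)"
    by (rule J.finite_measure_mono[OF sub]) (intro sets.Un S1 S2 S3)
  also have "\<dots> \<le> measure ?J (U1 \<union> U2) + measure ?J U3"
    by (rule measure_Un_le) (intro sets.Un S1 S2 S3)+
  also have "\<dots> \<le> measure ?J U1 + measure ?J U2 + measure ?J U3"
    using measure_Un_le[OF S1 S2] by simp
  also have "\<dots> \<le> real L * real L * p + 2 * real L * (1 - q)^L"
    using m1 m2 m3 by simp
  finally show ?thesis .
qed


lemma gbS: "{w. good_box L (fst w) (snd w) a} \<in> sets (joint_law p q)"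
proof -
  have "dep (box L a) {w. gb L w a}" unfolding dep_def using gb_dep by blast
  then have "{w. gb L w a} \<in> sets (joint_law p q)" by (rule dep_sets[OF box_finite])
  then show ?thesis by (simp add: gb_def)
qed

abbreviation RelG :: "nat \<Rightarrow> (site \<Rightarrow> bool) \<times> (site \<Rightarrow> bool) \<Rightarrow> site \<Rightarrow> site \<Rightarrow> bool" where
  "RelG L w \<equiv> (\<lambda>a b. nn_adj a b \<and> good_box L (fst w) (snd w) a \<and> good_box L (fst w) (snd w) b)"

lemma UNIV_joint: "UNIV \<in> sets (joint_law p q)"
  using sets.top[of "joint_law p q"] by (simp add: space_joint)

lemma powS: "{w. (RelG L w ^^ n) x y} \<in> sets (joint_law p q)"
proof (induction n arbitrary: y)
  case 0 then show ?case by (cases "x = y") (simp_all add: UNIV_joint)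
next
  case (Suc n)
  have eq: "{w. (RelG L w ^^ Suc n) x y} =
    (\<Union>z\<in>{z. nn_adj z y}. {w. (RelG L w ^^ n) x z} \<inter> {w. good_box L (fst w) (snd w) z} \<inter> {w. good_box L (fst w) (snd w) y})"
    by (auto simp: relcompp_apply)
  show ?case unfolding eq
    apply (rule sets.countable_UN''[OF countableI_type])
    apply (intro sets.Int Suc.IH gbS)
    done
qed

lemma rtcS: "{w. (RelG L w)\<^sup>*\<^sup>* x y} \<in> sets (joint_law p q)"
proof -
  have "{w. (RelG L w)\<^sup>*\<^sup>* x y} = (\<Union>n. {w. (RelG L w ^^ n) x y})"
    by (auto simp: rtranclp_power)
  then show ?thesis
    by (simp only:) (rule sets.countable_UN''[OF countableI_type powS])
qed

lemma inf_iff: "infinite (S :: site set) \<longleftrightarrow> (\<forall>n::nat. \<exists>y\<in>S. int n \<le> \<bar>fst y\<bar> + \<bar>snd y\<bar>)"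
proof
  assume inf: "infinite S"
  show "\<forall>n::nat. \<exists>y\<in>S. int n \<le> \<bar>fst y\<bar> + \<bar>snd y\<bar>"
  proof (rule ccontr)
    assume "\<not> ?thesis"
    then obtain n :: nat where "\<not> (\<exists>y\<in>S. int n \<le> \<bar>fst y\<bar> + \<bar>snd y\<bar>)" by blast
    then have n: "\<forall>y\<in>S. \<bar>fst y\<bar> + \<bar>snd y\<bar> < int n" by auto
    have "S \<subseteq> {-int n..int n} \<times> {-int n..int n}"
    proof
      fix y assume "y \<in> S"
      with n have "\<bar>fst y\<bar> + \<bar>snd y\<bar> < int n" by blast
      then show "y \<in> {-int n..int n} \<times> {-int n..int n}" by (cases y) auto
    qed
    then have "finite S" by (rule finite_subset) simp
    with inf show False by simp
  qed
next
  assume h: "\<forall>n::nat. \<exists>y\<in>S. int n \<le> \<bar>fst y\<bar> + \<bar>snd y\<bar>"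
  show "infinite S"
  proof
    assume fin: "finite S"
    have "\<exists>n::nat. \<forall>y\<in>S. \<bar>fst y\<bar> + \<bar>snd y\<bar> < int n"
      using fin
    proof (induction rule: finite_induct)
      case empty then show ?case by simp
    next
      case (insert x F)
      then obtain n :: nat where n: "\<forall>y\<in>F. \<bar>fst y\<bar> + \<bar>snd y\<bar> < int n" by blast
      show ?case
        by (rule exI[of _ "n + nat (\<bar>fst x\<bar> + \<bar>snd x\<bar>) + 1"]) (use n in force)
    qed
    then obtain n :: nat where n: "\<forall>y\<in>S. \<bar>fst y\<bar> + \<bar>snd y\<bar> < int n" by blast
    from h obtain y where "y \<in> S" "int n \<le> \<bar>fst y\<bar> + \<bar>snd y\<bar>" by blast
    with n show False by force
  qed
qed

lemma oic_eq: "origin_in_infinite_cluster L (fst w) (snd w) \<longleftrightarrow>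
   (\<exists>xh. (0,0) \<in> box L xh \<and> good_box L (fst w) (snd w) xh \<and>
      (\<forall>n::nat. \<exists>y. (RelG L w)\<^sup>*\<^sup>* xh y \<and> int n \<le> \<bar>fst y\<bar> + \<bar>snd y\<bar>))"
  unfolding origin_in_infinite_cluster_def good_cluster_def inf_iff by auto

lemma ev_sets: "{(omega, eta). origin_in_infinite_cluster L omega eta} \<in> sets (joint_law p q)"
proof -
  have eq: "{(omega, eta). origin_in_infinite_cluster L omega eta} =
    (\<Union>xh\<in>{xh. (0,0) \<in> box L xh}. {w. good_box L (fst w) (snd w) xh} \<inter>
       (\<Inter>n::nat. \<Union>y\<in>{y. int n \<le> \<bar>fst y\<bar> + \<bar>snd y\<bar>}. {w. (RelG L w)\<^sup>*\<^sup>* xh y}))"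
    (is "_ = ?R")
  proof -
    have "{(omega, eta). origin_in_infinite_cluster L omega eta} = {w. origin_in_infinite_cluster L (fst w) (snd w)}"
      by auto
    also have "\<dots> = ?R" unfolding oic_eq by blast
    finally show ?thesis .
  qed
  show ?thesis unfolding eq
    apply (rule sets.countable_UN''[OF countableI_type])
    apply (rule sets.Int[OF gbS])
    apply (rule sets.countable_INT''[OF UNIV_joint countableI_type])
    apply (rule sets.countable_UN''[OF countableI_type])
    apply (rule rtcS)
    done
qed


lemma good_imp:
  assumes L: "L > 0" and all: "\<forall>k. kg (gb L w) k (-1,-1)"
  shows "origin_in_infinite_cluster L (fst w) (snd w)"
proof -
  let ?o = "(-1,-1) :: site"
  let ?g = "gb L w"
  have so: "sub ?o 2 2 = ?o" by (simp add: sub_def)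
  have oT: "?o \<in> TT ?g k ?o" for k
  proof (induction k)
    case 0 then show ?case by simp
  next
    case (Suc k)
    have "TT ?g k (sub ?o 2 2) \<subseteq> TT ?g (Suc k) ?o"
      by (rule TT_sub) (use all so in auto)
    then show ?case using Suc so by (metis subsetD)
  qed
  have bx: "(0,0) \<in> box L ?o" unfolding box_def
    by (rule CollectI, rule exI[of _ "int L"], rule exI[of _ "int L"]) (use L in simp)
  have gd: "good_box L (fst w) (snd w) ?o" using all[rule_format, of 0] by (simp add: gb_def)
  have cl: "good_cluster L (fst w) (snd w) ?o = {y. (RelG L w)\<^sup>*\<^sup>* ?o y}"
    using gd by (simp add: good_cluster_def)
  have TTsub: "TT ?g k ?o \<subseteq> {y. (RelG L w)\<^sup>*\<^sup>* ?o y}" for k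
    using TT_main[of ?g k ?o] all oT[of k] by (auto simp: gb_def)
  have "infinite {y. (RelG L w)\<^sup>*\<^sup>* ?o y}"
  proof
    assume fin: "finite {y. (RelG L w)\<^sup>*\<^sup>* ?o y}"
    let ?N = "card {y. (RelG L w)\<^sup>*\<^sup>* ?o y}"
    have "?N + 1 \<le> card (TT ?g ?N ?o)" using TT_main[of ?g ?N ?o] all by blast
    also have "\<dots> \<le> ?N" by (rule card_mono[OF fin TTsub])
    finally show False by simp
  qed
  then have "infinite (good_cluster L (fst w) (snd w) ?o)" using cl by simp
  then show ?thesis unfolding origin_in_infinite_cluster_def using bx gd by blast
qed

lemma main_prob:
  assumes L: "L > 0" and p: "0 \<le> p" "p \<le> 1" and q: "0 \<le> q" "q \<le> 1"
    and d: "d = real L * real L * p + 2 * real L * (1 - q)^L" and d1: "162 * d \<le> 1"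
  shows "1 - 2 * d \<le> measure (joint_law p q) {(omega, eta). origin_in_infinite_cluster L omega eta}"
proof -
  interpret J: prob_space "joint_law p q" by (rule joint_prob)
  let ?J = "joint_law p q"
  let ?o = "(-1,-1) :: site"
  let ?Bad = "\<lambda>k. {w. \<not> kg (gb L w) k ?o}"
  have d0: "0 \<le> d" unfolding d using p q by simp
  have bnd: "measure ?J (?Bad k) \<le> d * (1/2)^k" for k
    by (rule all_bound[OF L d0 d1]) (use base_bound[OF L p q] d in simp)
  have summ: "summable (\<lambda>k. d * (1/2::real)^k)" by simp
  have summB: "summable (\<lambda>k. measure ?J (?Bad k))"
    by (rule summable_comparison_test[OF _ summ]) (use bnd in auto)
  have "measure ?J (\<Union>k. ?Bad k) \<le> (\<Sum>k. measure ?J (?Bad k))"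
    by (rule J.finite_measure_subadditive_countably[OF _ summB]) (auto intro: bad_sets)
  also have "\<dots> \<le> (\<Sum>k. d * (1/2::real)^k)"
    by (rule suminf_le[OF bnd summB summ])
  also have "\<dots> = 2 * d" using suminf_mult[OF summable_geometric[of "1/2::real"], of d]
    by (simp add: suminf_geometric)
  finally have U: "measure ?J (\<Union>k. ?Bad k) \<le> 2 * d" .
  have US: "(\<Union>k. ?Bad k) \<in> sets ?J" by (auto intro: bad_sets)
  have sub: "space ?J - (\<Union>k. ?Bad k) \<subseteq> {(omega, eta). origin_in_infinite_cluster L omega eta}"
  proof
    fix w assume "w \<in> space ?J - (\<Union>k. ?Bad k)"
    then have "\<forall>k. kg (gb L w) k ?o" by auto
    then have "origin_in_infinite_cluster L (fst w) (snd w)" by (rule good_imp[OF L])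
    then show "w \<in> {(omega, eta). origin_in_infinite_cluster L omega eta}" by (cases w) auto
  qed
  have "1 - 2 * d \<le> 1 - measure ?J (\<Union>k. ?Bad k)" using U by simp
  also have "\<dots> = measure ?J (space ?J - (\<Union>k. ?Bad k))" by (rule J.prob_compl[OF US, symmetric])
  also have "\<dots> \<le> measure ?J {(omega, eta). origin_in_infinite_cluster L omega eta}"
    by (rule J.finite_measure_mono[OF sub ev_sets])
  finally show ?thesis .
qed



theorem corollary2:
  fixes eps :: real
  assumes "eps > 0"
  shows "\<exists>q0 > 0. \<forall>q p. 0 < q \<and> q < q0 \<and> 0 \<le> p \<and> p < q powr (2 + eps) \<longrightarrow>
           measure (joint_law p q)
             {(omega, eta). origin_in_infinite_cluster (box_side q eps) omega eta}
           \<ge> 1 - 16 * q powr (eps / 3)"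
proof -
  let ?P = "\<lambda>q::real. q < 1 \<and> 2 * q powr (-1-eps/3) * exp (q - q powr (-eps/3)) \<le> q powr (eps/3) \<and>
     q powr (eps/3) \<le> 1/324"
  have ev: "eventually ?P (at_right 0)"
    using assms by (intro eventually_conj) real_asymp+
  then obtain q0 where q0: "q0 > 0" "\<And>q. 0 < q \<Longrightarrow> q < q0 \<Longrightarrow> ?P q"
    unfolding eventually_at_right_field by auto
  show ?thesis
  proof (intro exI[of _ q0] conjI allI impI q0(1))
    fix q p :: real
    assume h: "0 < q \<and> q < q0 \<and> 0 \<le> p \<and> p < q powr (2 + eps)"
    then have q: "0 < q" "q < 1" and p: "0 \<le> p" "p < q powr (2 + eps)"
      and E2: "2 * q powr (-1-eps/3) * exp (q - q powr (-eps/3)) \<le> q powr (eps/3)"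
      and E3: "q powr (eps/3) \<le> 1/324"
      using q0(2)[of q] by auto
    define X where "X = q powr (-1-eps/3)"
    define L where "L = box_side q eps"
    have X1: "1 \<le> X"
    proof -
      have "q powr (1 + eps/3) \<le> 1" using q assms by (intro powr_le1) auto
      moreover have "0 < q powr (1 + eps/3)" using q by simp
      ultimately have "1 \<le> inverse (q powr (1 + eps/3))" by (simp add: one_le_inverse_iff)
      then show ?thesis unfolding X_def by (simp add: powr_minus[symmetric])
    qed
    have LX: "real L = of_int \<lfloor>X\<rfloor>" unfolding L_def box_side_def X_def[symmetric]
      using X1 by simp
    have L_le: "real L \<le> X" using LX by simp
    have L_ge: "X - 1 < real L" using LX by linarith
    have Lpos: "L > 0" using L_ge X1 by simp
    have p1: "p \<le> 1"
    proof -
      have "q powr (2 + eps) \<le> 1" using q assms by (intro powr_le1) auto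
      then show ?thesis using p by simp
    qed
    define d where "d = real L * real L * p + 2 * real L * (1 - q)^L"
    have t1: "real L * real L * p \<le> q powr (eps/3)"
    proof -
      have "real L * real L * p \<le> X * X * q powr (2 + eps)"
        using L_le p by (intro mult_mono) auto
      also have "X * X * q powr (2 + eps) = q powr ((-1-eps/3) + (-1-eps/3) + (2 + eps))"
        unfolding X_def by (simp only: powr_add)
      also have "(-1-eps/3) + (-1-eps/3) + (2 + eps) = eps/3" by simp
      finally show ?thesis .
    qed
    have t2: "2 * real L * (1 - q)^L \<le> q powr (eps/3)"
    proof -
      have "(1 - q)^L \<le> exp (-q)^L"
        using q by (intro power_mono) (auto simp: exp_ge_add_one_self[of "-q", simplified])
      also have "\<dots> = exp (- q * real L)" by (simp add: exp_of_nat_mult[symmetric] mult.commute)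
      also have "\<dots> \<le> exp (q - q * X)"
      proof -
        have "q * X \<le> q * (1 + real L)" using L_ge q by (intro mult_left_mono) auto
        then show ?thesis by (simp add: algebra_simps)
      qed
      also have "q * X = q powr (-eps/3)"
      proof -
        have "q * X = q powr 1 * q powr (-1-eps/3)" using q by (simp add: X_def)
        also have "\<dots> = q powr (1 + (-1-eps/3))" by (simp only: powr_add)
        also have "1 + (-1-eps/3) = -eps/3" by simp
        finally show ?thesis .
      qed
      finally have a: "(1 - q)^L \<le> exp (q - q powr (-eps/3))" .
      have "2 * real L * (1 - q)^L \<le> 2 * X * exp (q - q powr (-eps/3))"
        using L_le a q by (intro mult_mono) auto
      also have "\<dots> \<le> q powr (eps/3)" using E2 X_def by simp
      finally show ?thesis .
    qed
    have d2: "d \<le> 2 * q powr (eps/3)" unfolding d_def using t1 t2 by simp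
    have d1: "162 * d \<le> 1" using d2 E3 by simp
    have "1 - 2 * d \<le> measure (joint_law p q) {(omega, eta). origin_in_infinite_cluster L omega eta}"
      by (rule main_prob[OF Lpos p(1) p1 _ _ d_def d1]) (use q in auto)
    moreover have "1 - 16 * q powr (eps / 3) \<le> 1 - 2 * d" using d2 powr_ge_zero[of q "eps/3"] by linarith
    ultimately show "measure (joint_law p q) {(omega, eta). origin_in_infinite_cluster (box_side q eps) omega eta}
           \<ge> 1 - 16 * q powr (eps / 3)" unfolding L_def by linarith
  qed
qed

end
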